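(* For every $\phi\in L^1(\mathbb{R}_+)$ with $\int_0^\infty\phi(x)\,dx = 1$, the summability method $S_\phi$ is stronger than $K$; that is, $K$ is the weakest among these summability methods.
   Context: $\mathbb{R}_+=[0,\infty)$; functions are complex-valued. For $f\in L^\infty(\mathbb{R}_+)$: $K(f)=\alpha$ means that $f(\cdot+s)$ converges as $s\to\infty$ to the constant $\alpha$ in the weak* topology of $L^\infty(\mathbb{R}_+)$; $\mathcal{D}(K)$ is the set of $f$ for which such a constant limit exists. $S_\phi(f) = \lim_{x\to\infty}\int_0^x f(t)\phi(x-t)\,dt$, with domain the $f$ for which the limit exists. $S$ is stronger than $S'$ if $\mathcal{D}(S')\subseteq\mathcal{D}(S)$ and $S=S'$ on $\mathcal{D}(S')$. *)

theory Defs
  imports "HOL-Analysis.Analysis"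
begin

text \<open>Functions on R+ are modelled as functions real \<Rightarrow> complex, only their values on
  {0..} matter. Lebesgue measure is used throughout.\<close>

definition Linfty_Rplus :: "(real \<Rightarrow> complex) \<Rightarrow> bool" where
  "Linfty_Rplus f \<longleftrightarrow> set_borel_measurable lebesgue {0..} f \<and>
     (\<exists>B. AE t in lebesgue. t \<ge> 0 \<longrightarrow> norm (f t) \<le> B)"

text \<open>K f \<alpha>: f(.+s) \<rightarrow> \<alpha> weak* in L^\<infinity>(R+) = L^1(R+)^*, as s \<rightarrow> \<infinity>.\<close>
definition K_method :: "(real \<Rightarrow> complex) \<Rightarrow> complex \<Rightarrow> bool" where
  "K_method f \<alpha> \<longleftrightarrow> Linfty_Rplus f \<and>
     (\<forall>g :: real \<Rightarrow> complex. set_integrable lebesgue {0..} g \<longrightarrow>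
        ((\<lambda>s. LINT t:{0..}|lebesgue. f (t + s) * g t)
           \<longlongrightarrow> \<alpha> * (LINT t:{0..}|lebesgue. g t)) at_top)"

definition S_method :: "(real \<Rightarrow> complex) \<Rightarrow> (real \<Rightarrow> complex) \<Rightarrow> complex \<Rightarrow> bool" where
  "S_method \<phi> f \<alpha> \<longleftrightarrow> Linfty_Rplus f \<and>
     ((\<lambda>x. LINT t:{0..x}|lebesgue. f t * \<phi> (x - t)) \<longlongrightarrow> \<alpha>) at_top"

text \<open>Methods are relations "f is summed to \<alpha>"; the domain is {f. \<exists>\<alpha>. S f \<alpha>}
  (limits are unique). S stronger than S': D(S') \<subseteq> D(S) and S = S' on D(S').\<close>
definition stronger :: "((real \<Rightarrow> complex) \<Rightarrow> complex \<Rightarrow> bool) \<Rightarrow>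
    ((real \<Rightarrow> complex) \<Rightarrow> complex \<Rightarrow> bool) \<Rightarrow> bool" where
  "stronger S S' \<longleftrightarrow> (\<forall>f. (\<exists>\<alpha>. S' f \<alpha>) \<longrightarrow> (\<exists>\<alpha>. S f \<alpha>)) \<and>
     (\<forall>f \<alpha> \<beta>. S' f \<alpha> \<longrightarrow> S f \<beta> \<longrightarrow> \<alpha> = \<beta>)"

end

theory Submission
  imports Defs
begin

lemma conv_piece:
 fixes f \<phi> :: "real \<Rightarrow> complex"
 assumes fm: "(\<lambda>t. indicator {0..} t *\<^sub>R f t) \<in> borel_measurable lebesgue"
  and fb: "AE t in lebesgue. t \<ge> 0 \<longrightarrow> norm (f t) \<le> B" and B: "0 \<le> B"
  and pi: "integrable lebesgue (\<lambda>t. indicator {0..} t *\<^sub>R \<phi> t)"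
  and S: "S \<in> sets lebesgue" "S \<subseteq> {0..x}"
 shows "integrable lebesgue (\<lambda>\<tau>. indicator S \<tau> *\<^sub>R (f \<tau> * \<phi> (x - \<tau>)))"
  and "norm (LINT \<tau>|lebesgue. indicator S \<tau> *\<^sub>R (f \<tau> * \<phi> (x - \<tau>)))
        \<le> B * (LINT \<tau>|lebesgue. indicator S \<tau> * norm (\<phi> (x - \<tau>)))"
proof -
  define \<psi> where "\<psi> \<tau> = indicator {0..} (x - \<tau>) *\<^sub>R \<phi> (x - \<tau>)" for \<tau>
  have "integrable lebesgue (\<lambda>\<tau>. indicator {0..} (x + -1 * \<tau>) *\<^sub>R \<phi> (x + -1 * \<tau>))"
    using lebesgue_integrable_real_affine[OF pi, of "-1" x] by simp
  then have ip: "integrable lebesgue \<psi>" unfolding \<psi>_def by simp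
  have ipS: "integrable lebesgue (\<lambda>\<tau>. indicator S \<tau> *\<^sub>R \<psi> \<tau>)"
    by (rule integrable_mult_indicator[OF S(1) ip])
  have eq: "indicator S \<tau> *\<^sub>R (f \<tau> * \<phi> (x - \<tau>)) = (indicator {0..} \<tau> *\<^sub>R f \<tau>) * (indicator S \<tau> *\<^sub>R \<psi> \<tau>)" for \<tau>
    using S(2) by (cases "\<tau> \<in> S") (auto simp: \<psi>_def indicator_def)
  have meas: "(\<lambda>\<tau>. indicator S \<tau> *\<^sub>R (f \<tau> * \<phi> (x - \<tau>))) \<in> borel_measurable lebesgue"
    unfolding eq using fm borel_measurable_integrable[OF ipS] by measurable
  have ae: "AE \<tau> in lebesgue. norm (indicator S \<tau> *\<^sub>R (f \<tau> * \<phi> (x - \<tau>))) \<le> B * (indicator S \<tau> * norm (\<phi> (x - \<tau>)))"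
    using fb
  proof eventually_elim
    case (elim \<tau>)
    show ?case
    proof (cases "\<tau> \<in> S")
      case True
      then have "\<tau> \<ge> 0" using S(2) by auto
      with elim have "norm (f \<tau>) \<le> B" by auto
      then show ?thesis using True by (simp add: norm_mult mult_right_mono)
    qed simp
  qed
  have i2: "integrable lebesgue (\<lambda>\<tau>. indicator S \<tau> * norm (\<phi> (x - \<tau>)))"
  proof -
    have eq2: "(\<lambda>\<tau>. norm (indicator S \<tau> *\<^sub>R \<psi> \<tau>)) = (\<lambda>\<tau>. indicator S \<tau> * norm (\<phi> (x - \<tau>)))"
      using S(2) by (auto simp: \<psi>_def fun_eq_iff split: split_indicator)
    show ?thesis using integrable_norm[OF ipS] unfolding eq2 .
  qed
  show i1: "integrable lebesgue (\<lambda>\<tau>. indicator S \<tau> *\<^sub>R (f \<tau> * \<phi> (x - \<tau>)))"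
  proof (rule Bochner_Integration.integrable_bound[OF _ meas])
    show "integrable lebesgue (\<lambda>\<tau>. B * (indicator S \<tau> * norm (\<phi> (x - \<tau>))))" using i2 by simp
    show "AE \<tau> in lebesgue. norm (indicator S \<tau> *\<^sub>R (f \<tau> * \<phi> (x - \<tau>))) \<le> norm (B * (indicator S \<tau> * norm (\<phi> (x - \<tau>))))"
      using ae by eventually_elim (use B in auto)
  qed
  have "norm (LINT \<tau>|lebesgue. indicator S \<tau> *\<^sub>R (f \<tau> * \<phi> (x - \<tau>)))
     \<le> (LINT \<tau>|lebesgue. norm (indicator S \<tau> *\<^sub>R (f \<tau> * \<phi> (x - \<tau>))))"
    by (rule integral_norm_bound)
  also have "\<dots> \<le> (LINT \<tau>|lebesgue. B * (indicator S \<tau> * norm (\<phi> (x - \<tau>))))"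
    by (rule integral_mono_AE[OF integrable_norm[OF i1] _ ae]) (use i2 in simp)
  also have "\<dots> = B * (LINT \<tau>|lebesgue. indicator S \<tau> * norm (\<phi> (x - \<tau>)))" by simp
  finally show "norm (LINT \<tau>|lebesgue. indicator S \<tau> *\<^sub>R (f \<tau> * \<phi> (x - \<tau>)))
        \<le> B * (LINT \<tau>|lebesgue. indicator S \<tau> * norm (\<phi> (x - \<tau>)))" .
qed

lemma dom_tail:
  fixes s :: "nat \<Rightarrow> 'a \<Rightarrow> real"
  assumes "\<And>i. s i \<in> borel_measurable M" "integrable M w" "AE x in M. (\<lambda>i. s i x) \<longlonglongrightarrow> 0"
    "\<And>i. AE x in M. norm (s i x) \<le> w x"
  shows "(\<lambda>n. integral\<^sup>L M (s n)) \<longlonglongrightarrow> 0"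
proof -
  have "(\<lambda>n. integral\<^sup>L M (s n)) \<longlonglongrightarrow> integral\<^sup>L M (\<lambda>x. 0)"
    by (rule integral_dominated_convergence[where w=w]) (use assms in auto)
  then show ?thesis by simp
qed

lemma main_K_S:
  fixes \<phi> f :: "real \<Rightarrow> complex"
  assumes pi0: "set_integrable lebesgue {0..} \<phi>"
    and one0: "(LINT x:{0..}|lebesgue. \<phi> x) = 1"
    and K: "K_method f \<alpha>"
  shows "S_method \<phi> f \<alpha>"
proof -
  define \<Phi> where "\<Phi> u = indicator {0..} u *\<^sub>R \<phi> u" for u
  have pi: "integrable lebesgue (\<lambda>t. indicator {0..} t *\<^sub>R \<phi> t)"
    using pi0 by (simp add: set_integrable_def)
  then have iPhi: "integrable lebesgue \<Phi>" unfolding \<Phi>_def[abs_def] .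
  have one: "integral\<^sup>L lebesgue \<Phi> = 1" using one0 unfolding \<Phi>_def[abs_def] set_lebesgue_integral_def .
  have Linf: "Linfty_Rplus f" and Kl: "\<And>g. set_integrable lebesgue {0..} g \<Longrightarrow>
        ((\<lambda>s. LINT t:{0..}|lebesgue. f (t + s) * g t)
           \<longlongrightarrow> \<alpha> * (LINT t:{0..}|lebesgue. g t)) at_top"
    using K unfolding K_method_def by auto
  have fm: "(\<lambda>t. indicator {0..} t *\<^sub>R f t) \<in> borel_measurable lebesgue"
    using Linf unfolding Linfty_Rplus_def set_borel_measurable_def by auto
  obtain B0 where B0: "AE t in lebesgue. t \<ge> 0 \<longrightarrow> norm (f t) \<le> B0"
    using Linf unfolding Linfty_Rplus_def by auto
  define B where "B = max B0 0"
  have B: "0 \<le> B" by (simp add: B_def)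
  have fb: "AE t in lebesgue. t \<ge> 0 \<longrightarrow> norm (f t) \<le> B"
    using B0 by eventually_elim (auto simp: B_def)
  define sT where "sT A u = indicator {max A 0..} u * norm (\<Phi> u)" for A u
  have inPhi: "integrable lebesgue (\<lambda>u. norm (\<Phi> u))" using iPhi by simp
  have sT_int: "integrable lebesgue (sT A)" for A
  proof -
    have "integrable lebesgue (\<lambda>u. indicator {max A 0..} u *\<^sub>R norm (\<Phi> u))"
      by (rule integrable_mult_indicator[OF _ inPhi]) simp
    then show ?thesis by (simp add: sT_def[abs_def])
  qed
  have tail: "(\<lambda>n. integral\<^sup>L lebesgue (sT (real n))) \<longlonglongrightarrow> 0"
  proof (rule dom_tail[where w="\<lambda>u. norm (\<Phi> u)"])
    show "sT (real i) \<in> borel_measurable lebesgue" for i using sT_int[of "real i"] by (rule borel_measurable_integrable)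
    show "integrable lebesgue (\<lambda>u. norm (\<Phi> u))" by (rule inPhi)
    show "AE x in lebesgue. (\<lambda>i. sT (real i) x) \<longlonglongrightarrow> 0"
    proof (rule AE_I2)
      fix x
      obtain n :: nat where n: "x < real n" using reals_Archimedean2 by blast
      have "eventually (\<lambda>i. sT (real i) x = 0) sequentially"
        unfolding eventually_sequentially
        by (rule exI[of _ n]) (use n in \<open>auto simp: sT_def indicator_def\<close>)
      then show "(\<lambda>i. sT (real i) x) \<longlonglongrightarrow> 0" by (rule tendsto_eventually)
    qed
    show "AE x in lebesgue. norm (sT (real i) x) \<le> norm (\<Phi> x)" for i
      by (intro AE_I2) (auto simp: sT_def indicator_def)
  qed
  show ?thesis
    unfolding S_method_def
  proof (intro conjI Linf tendstoI)
    fix \<epsilon> :: real assume \<epsilon>: "0 < \<epsilon>"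
    define \<delta> where "\<delta> = \<epsilon> / (B + norm \<alpha> + 2)"
    have den: "0 < B + norm \<alpha> + 2" using B by (simp add: add_nonneg_pos)
    have \<delta>: "0 < \<delta>" using \<epsilon> den by (simp add: \<delta>_def)
    have \<delta>eq: "\<delta> * (B + norm \<alpha> + 2) = \<epsilon>" using den by (simp add: \<delta>_def)
    have "eventually (\<lambda>n. dist (integral\<^sup>L lebesgue (sT (real n))) 0 < \<delta>) sequentially"
      using tendstoD[OF tail \<delta>] by simp
    then obtain N where N: "dist (integral\<^sup>L lebesgue (sT (real N))) 0 < \<delta>"
      by (auto simp: eventually_sequentially)
    define A where "A = real N"
    have A: "0 \<le> A" by (simp add: A_def)
    have tA: "integral\<^sup>L lebesgue (sT A) < \<delta>"
      using N by (simp add: A_def)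
    have sTA: "sT A u = indicator {A..} u * norm (\<Phi> u)" for u using A by (simp add: sT_def)
    define g where "g t = indicator {0..A} t *\<^sub>R \<phi> (A - t)" for t
    define \<psi> where "\<psi> \<tau> = indicator {0..} (A - \<tau>) *\<^sub>R \<phi> (A - \<tau>)" for \<tau>
    have "integrable lebesgue (\<lambda>\<tau>. indicator {0..} (A + -1 * \<tau>) *\<^sub>R \<phi> (A + -1 * \<tau>))"
      using lebesgue_integrable_real_affine[OF pi, of "-1" A] by simp
    then have ip: "integrable lebesgue \<psi>" unfolding \<psi>_def by simp
    have "integrable lebesgue (\<lambda>t. indicator {0..A} t *\<^sub>R \<psi> t)"
      by (rule integrable_mult_indicator[OF _ ip]) simp
    moreover have "(\<lambda>t. indicator {0..A} t *\<^sub>R \<psi> t) = (\<lambda>t. indicator {0..} t *\<^sub>R g t)"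
      by (auto simp: fun_eq_iff \<psi>_def g_def split: split_indicator)
    ultimately have gi: "set_integrable lebesgue {0..} g" by (simp add: set_integrable_def)
    define cA where "cA = (LINT t:{0..}|lebesgue. g t)"
    have cA_eq: "cA = (LINT u|lebesgue. indicator {0..A} u *\<^sub>R \<phi> u)"
    proof -
      have "(LINT u|lebesgue. indicator {0..A} u *\<^sub>R \<phi> u)
          = \<bar>-1\<bar> *\<^sub>R (LINT x|lebesgue. indicator {0..A} (A + -1 * x) *\<^sub>R \<phi> (A + -1 * x))"
        by (rule lebesgue_integral_real_affine) simp
      also have "(\<lambda>x. indicator {0..A} (A + -1 * x) *\<^sub>R \<phi> (A + -1 * x)) = (\<lambda>x. indicator {0..} x *\<^sub>R g x)"
        by (auto simp: fun_eq_iff g_def split: split_indicator)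
      finally show ?thesis by (simp add: cA_def set_lebesgue_integral_def)
    qed
    have cA1: "norm (cA - 1) \<le> \<delta>"
    proof -
      have i1: "integrable lebesgue (\<lambda>u. indicator {0..A} u *\<^sub>R \<Phi> u)"
        by (rule integrable_mult_indicator[OF _ iPhi]) simp
      have i2: "integrable lebesgue (\<lambda>u. indicator {A<..} u *\<^sub>R \<Phi> u)"
        by (rule integrable_mult_indicator[OF _ iPhi]) simp
      have "(\<lambda>u. indicator {0..A} u *\<^sub>R \<phi> u) = (\<lambda>u. indicator {0..A} u *\<^sub>R \<Phi> u)"
        by (auto simp: fun_eq_iff \<Phi>_def split: split_indicator)
      then have c2: "cA = (LINT u|lebesgue. indicator {0..A} u *\<^sub>R \<Phi> u)" using cA_eq by simp
      have "\<Phi> = (\<lambda>u. indicator {0..A} u *\<^sub>R \<Phi> u + indicator {A<..} u *\<^sub>R \<Phi> u)"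
        using A by (auto simp: fun_eq_iff \<Phi>_def split: split_indicator)
      then have "1 = cA + (LINT u|lebesgue. indicator {A<..} u *\<^sub>R \<Phi> u)"
        using one c2 Bochner_Integration.integral_add[OF i1 i2] by metis
      then have "cA - 1 = - (LINT u|lebesgue. indicator {A<..} u *\<^sub>R \<Phi> u)" by (simp add: algebra_simps)
      then have "norm (cA - 1) = norm (LINT u|lebesgue. indicator {A<..} u *\<^sub>R \<Phi> u)" by simp
      also have "\<dots> \<le> integral\<^sup>L lebesgue (sT A)"
        by (rule Bochner_Integration.integral_norm_bound_integral[OF i2 sT_int]) (auto simp: sTA indicator_def)
      finally show ?thesis using tA by simp
    qed
    have "eventually (\<lambda>s. dist (LINT t:{0..}|lebesgue. f (t + s) * g t) (\<alpha> * cA) < \<delta>) at_top"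
      using tendstoD[OF Kl[OF gi] \<delta>] by (simp add: cA_def)
    then obtain S0 where S0: "\<And>s. s \<ge> S0 \<Longrightarrow> dist (LINT t:{0..}|lebesgue. f (t + s) * g t) (\<alpha> * cA) < \<delta>"
      by (auto simp: eventually_at_top_linorder)
    show "eventually (\<lambda>x. dist (LINT t:{0..x}|lebesgue. f t * \<phi> (x - t)) \<alpha> < \<epsilon>) at_top"
      using eventually_ge_at_top[of "max (S0 + A) A"]
    proof eventually_elim
      case (elim x)
      then have xA: "x - A \<ge> S0" "x - A \<ge> 0" by auto
      define F where "F S = (LINT \<tau>|lebesgue. indicator S \<tau> *\<^sub>R (f \<tau> * \<phi> (x - \<tau>)))" for S
      have I1: "integrable lebesgue (\<lambda>\<tau>. indicator {0..<x-A} \<tau> *\<^sub>R (f \<tau> * \<phi> (x - \<tau>)))"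
        by (rule conv_piece(1)[OF fm fb B pi]) (use A xA in auto)
      have I2: "integrable lebesgue (\<lambda>\<tau>. indicator {x-A..x} \<tau> *\<^sub>R (f \<tau> * \<phi> (x - \<tau>)))"
        by (rule conv_piece(1)[OF fm fb B pi]) (use A xA in auto)
      have N1: "norm (F {0..<x-A}) \<le> B * (LINT \<tau>|lebesgue. indicator {0..<x-A} \<tau> * norm (\<phi> (x - \<tau>)))"
        unfolding F_def by (rule conv_piece(2)[OF fm fb B pi]) (use A xA in auto)
      have split: "(\<lambda>\<tau>. indicator {0..x} \<tau> *\<^sub>R (f \<tau> * \<phi> (x - \<tau>))) =
         (\<lambda>\<tau>. indicator {0..<x-A} \<tau> *\<^sub>R (f \<tau> * \<phi> (x - \<tau>)) + indicator {x-A..x} \<tau> *\<^sub>R (f \<tau> * \<phi> (x - \<tau>)))"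
        using xA A by (auto simp: fun_eq_iff split: split_indicator)
      have Ieq: "(LINT t:{0..x}|lebesgue. f t * \<phi> (x - t)) = F {0..<x-A} + F {x-A..x}"
        unfolding set_lebesgue_integral_def F_def split by (rule Bochner_Integration.integral_add[OF I1 I2])
      have Jeq: "F {x-A..x} = (LINT t:{0..}|lebesgue. f (t + (x - A)) * g t)"
      proof -
        have "F {x-A..x} = \<bar>1\<bar> *\<^sub>R (LINT t|lebesgue. indicator {x-A..x} ((x - A) + 1 * t) *\<^sub>R
              (f ((x - A) + 1 * t) * \<phi> (x - ((x - A) + 1 * t))))"
          unfolding F_def by (rule lebesgue_integral_real_affine) simp
        also have "(\<lambda>t. indicator {x-A..x} ((x - A) + 1 * t) *\<^sub>R
              (f ((x - A) + 1 * t) * \<phi> (x - ((x - A) + 1 * t)))) = (\<lambda>t. indicator {0..} t *\<^sub>R (f (t + (x - A)) * g t))"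
          by (auto simp: fun_eq_iff g_def add.commute split: split_indicator)
        finally show ?thesis by (simp add: set_lebesgue_integral_def)
      qed
      have T1: "(LINT \<tau>|lebesgue. indicator {0..<x-A} \<tau> * norm (\<phi> (x - \<tau>))) \<le> integral\<^sup>L lebesgue (sT A)"
      proof -
        have "(LINT u|lebesgue. indicator {A<..x} u * norm (\<phi> u)) = \<bar>-1\<bar> *\<^sub>R (LINT \<tau>|lebesgue. indicator {A<..x} (x + -1 * \<tau>) * norm (\<phi> (x + -1 * \<tau>)))"
          by (rule lebesgue_integral_real_affine) simp
        also have "(\<lambda>\<tau>. indicator {A<..x} (x + -1 * \<tau>) * norm (\<phi> (x + -1 * \<tau>))) = (\<lambda>\<tau>. indicator {0..<x-A} \<tau> * norm (\<phi> (x - \<tau>)))"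
          by (auto simp: fun_eq_iff split: split_indicator)
        finally have e: "(LINT \<tau>|lebesgue. indicator {0..<x-A} \<tau> * norm (\<phi> (x - \<tau>))) = (LINT u|lebesgue. indicator {A<..x} u * norm (\<phi> u))" by simp
        have "integrable lebesgue (\<lambda>u. indicator {A<..x} u *\<^sub>R norm (\<Phi> u))"
          by (rule integrable_mult_indicator[OF _ inPhi]) simp
        moreover have "(\<lambda>u. indicator {A<..x} u *\<^sub>R norm (\<Phi> u)) = (\<lambda>u. indicator {A<..x} u * norm (\<phi> u))"
          using A by (auto simp: fun_eq_iff \<Phi>_def split: split_indicator)
        ultimately have ih: "integrable lebesgue (\<lambda>u. indicator {A<..x} u * norm (\<phi> u))" by simp
        show ?thesis unfolding e
          by (rule Bochner_Integration.integral_mono[OF ih sT_int]) (use A in \<open>auto simp: sTA \<Phi>_def split: split_indicator\<close>)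
      qed
      have nP1: "norm (F {0..<x-A}) \<le> B * \<delta>"
        using N1 T1 tA B by (smt (verit) mult_left_mono)
      have nP2: "norm (F {x-A..x} - \<alpha> * cA) < \<delta>"
        using S0[OF xA(1)] Jeq by (simp add: dist_norm)
      have nP3: "norm (\<alpha> * cA - \<alpha>) \<le> norm \<alpha> * \<delta>"
      proof -
        have "norm (\<alpha> * cA - \<alpha>) = norm \<alpha> * norm (cA - 1)" by (simp add: norm_mult[symmetric] algebra_simps)
        also have "\<dots> \<le> norm \<alpha> * \<delta>" by (rule mult_left_mono[OF cA1]) simp
        finally show ?thesis .
      qed
      have "dist (LINT t:{0..x}|lebesgue. f t * \<phi> (x - t)) \<alpha>
          = norm (F {0..<x-A} + (F {x-A..x} - \<alpha> * cA) + (\<alpha> * cA - \<alpha>))"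
        unfolding Ieq dist_norm by (simp add: algebra_simps)
      also have "\<dots> \<le> norm (F {0..<x-A}) + norm (F {x-A..x} - \<alpha> * cA) + norm (\<alpha> * cA - \<alpha>)"
        by (rule order_trans[OF norm_triangle_ineq]) (simp add: norm_triangle_ineq)
      also have "\<dots> < B * \<delta> + \<delta> + norm \<alpha> * \<delta>" using nP1 nP2 nP3 by simp
      also have "\<dots> < \<epsilon>" using \<delta>eq \<delta> by (simp add: algebra_simps)
      finally show ?case .
    qed
  qed
qed

theorem corollary3p2:
  fixes \<phi> :: "real \<Rightarrow> complex"
  assumes "set_integrable lebesgue {0..} \<phi>"
    and "(LINT x:{0..}|lebesgue. \<phi> x) = 1"
  shows "stronger (S_method \<phi>) K_method"
  unfolding stronger_def
proof (intro conjI allI impI)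
  fix f assume "\<exists>\<alpha>. K_method f \<alpha>"
  then show "\<exists>\<alpha>. S_method \<phi> f \<alpha>" using main_K_S[OF assms] by blast
next
  fix f \<alpha> \<beta> assume K: "K_method f \<alpha>" and S: "S_method \<phi> f \<beta>"
  have "S_method \<phi> f \<alpha>" using main_K_S[OF assms K] .
  with S show "\<alpha> = \<beta>" unfolding S_method_def
    using tendsto_unique[OF trivial_limit_at_top_linorder] by blast
qed

end
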